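(* Let $\Lambda$ be a row-finite $k$-graph with no sources and let $\alpha$ be an action of $\mathbb{Z}^l$ on $\Lambda$ by automorphisms. Then $\Lambda$ is $\alpha$-cofinal if and only if $\Lambda\times_\alpha\mathbb{Z}^l$ is cofinal.
   Context: A $k$-graph is a countable category $\Lambda$ with a functor $d:\Lambda\to\mathbb{N}^k$ with unique factorisation; vertices are degree-$0$ morphisms; $v\Lambda w=\{\lambda:r(\lambda)=v,s(\lambda)=w\}$; row-finite: each $v\Lambda^n$ finite; no sources: each $v\Lambda^n$ nonempty. An automorphism is a bijective degree-preserving functor. $\Lambda\times_\alpha\mathbb{Z}^l$ is the $(k+l)$-graph with morphisms $\Lambda\times\mathbb{N}^l$, degree $(d(\lambda),m)$, $r(\lambda,m)=(r(\lambda),0)$, $s(\lambda,m)=(\alpha_{-m}(s(\lambda)),0)$, $(\mu,m)(\nu,n)=(\mu\alpha_m(\nu),m+n)$. For a $j$-graph $\Gamma$, $\Gamma^\infty$ is the set of degree-preserving functors $x:\Omega_j\to\Gamma$ ($\Omega_j=\{(a,b)\in\mathbb{N}^j\times\mathbb{N}^j:a\le b\}$, $r(a,b)=(a,a)$, $s(a,b)=(b,b)$, $d(a,b)=b-a$), and $x(n):=x(n,n)$. $\Gamma$ (row-finite, no sources) is cofinal if for every $x\in\Gamma^\infty$ and vertex $v$ there is $n$ with $v\Gamma x(n)\ne\emptyset$. $\Lambda$ is $\alpha$-cofinal if for every vertex $v$ and $x\in\Lambda^\infty$ there exist $p\in\mathbb{N}^k$ and $m,n\in\mathbb{N}^l$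 with $\alpha_{-m}(v)\Lambda\alpha_{-n}(x(p))\ne\emptyset$. *)

theory Defs
  imports Main "HOL-Library.Function_Algebras" "HOL-Library.Countable_Set"
begin

text \<open>A k-graph is encoded as a category given by its set of morphisms, range and
 source maps (returning the identity morphism at the range / source object),
 a (partial) composition, and a degree map into N^k, where N^k is represented as
 'k => nat for a finite index type 'k (so k = CARD('k)).\<close>

record ('a, 'k) kgraph =
  Mor :: "'a set"
  rg  :: "'a \<Rightarrow> 'a"
  sr  :: "'a \<Rightarrow> 'a"
  cp  :: "'a \<Rightarrow> 'a \<Rightarrow> 'a"
  dg  :: "'a \<Rightarrow> 'k \<Rightarrow> nat"

definition is_category :: "('a, 'k) kgraph \<Rightarrow> bool" where
  "is_category G \<longleftrightarrow>
     (\<forall>f\<in>Mor G. rg G f \<in> Mor G \<and> sr G f \<in> Mor G) \<and>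
     (\<forall>f\<in>Mor G. rg G (rg G f) = rg G f \<and> sr G (rg G f) = rg G f \<and>
                 rg G (sr G f) = sr G f \<and> sr G (sr G f) = sr G f) \<and>
     (\<forall>f\<in>Mor G. cp G (rg G f) f = f \<and> cp G f (sr G f) = f) \<and>
     (\<forall>f\<in>Mor G. \<forall>g\<in>Mor G. sr G f = rg G g \<longrightarrow>
        cp G f g \<in> Mor G \<and> rg G (cp G f g) = rg G f \<and> sr G (cp G f g) = sr G g) \<and>
     (\<forall>f\<in>Mor G. \<forall>g\<in>Mor G. \<forall>h\<in>Mor G. sr G f = rg G g \<longrightarrow> sr G g = rg G h \<longrightarrow>
        cp G (cp G f g) h = cp G f (cp G g h))"

definition is_kgraph :: "('a, 'k::finite) kgraph \<Rightarrow> bool" where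
  "is_kgraph G \<longleftrightarrow> is_category G \<and> countable (Mor G) \<and>
     (\<forall>f\<in>Mor G. \<forall>g\<in>Mor G. sr G f = rg G g \<longrightarrow> dg G (cp G f g) = dg G f + dg G g) \<and>
     (\<forall>f\<in>Mor G. \<forall>m n. dg G f = m + n \<longrightarrow>
        (\<exists>!p. fst p \<in> Mor G \<and> snd p \<in> Mor G \<and> sr G (fst p) = rg G (snd p) \<and>
              cp G (fst p) (snd p) = f \<and> dg G (fst p) = m \<and> dg G (snd p) = n))"

definition vertices :: "('a, 'k) kgraph \<Rightarrow> 'a set" where
  "vertices G = {v \<in> Mor G. dg G v = 0}"

definition paths_between :: "('a, 'k) kgraph \<Rightarrow> 'a \<Rightarrow> 'a \<Rightarrow> 'a set" where
  "paths_between G v w = {f \<in> Mor G. rg G f = v \<and> sr G f = w}"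

definition row_finite :: "('a, 'k) kgraph \<Rightarrow> bool" where
  "row_finite G \<longleftrightarrow> (\<forall>v\<in>vertices G. \<forall>n. finite {f \<in> Mor G. rg G f = v \<and> dg G f = n})"

definition no_sources :: "('a, 'k) kgraph \<Rightarrow> bool" where
  "no_sources G \<longleftrightarrow> (\<forall>v\<in>vertices G. \<forall>n. {f \<in> Mor G. rg G f = v \<and> dg G f = n} \<noteq> {})"

definition automorphism :: "('a, 'k) kgraph \<Rightarrow> ('a \<Rightarrow> 'a) \<Rightarrow> bool" where
  "automorphism G \<phi> \<longleftrightarrow> bij_betw \<phi> (Mor G) (Mor G) \<and>
     (\<forall>f\<in>Mor G. dg G (\<phi> f) = dg G f \<and> rg G (\<phi> f) = \<phi> (rg G f) \<and> sr G (\<phi> f) = \<phi> (sr G f)) \<and>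
     (\<forall>f\<in>Mor G. \<forall>g\<in>Mor G. sr G f = rg G g \<longrightarrow> \<phi> (cp G f g) = cp G (\<phi> f) (\<phi> g))"

definition is_action :: "('a, 'k) kgraph \<Rightarrow> (('l \<Rightarrow> int) \<Rightarrow> 'a \<Rightarrow> 'a) \<Rightarrow> bool" where
  "is_action G \<alpha> \<longleftrightarrow> (\<forall>m. automorphism G (\<alpha> m)) \<and>
     (\<forall>f\<in>Mor G. \<alpha> 0 f = f) \<and>
     (\<forall>m n. \<forall>f\<in>Mor G. \<alpha> (m + n) f = \<alpha> m (\<alpha> n f))"

definition act_pos :: "(('l \<Rightarrow> int) \<Rightarrow> 'a \<Rightarrow> 'a) \<Rightarrow> ('l \<Rightarrow> nat) \<Rightarrow> 'a \<Rightarrow> 'a" where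
  "act_pos \<alpha> m = \<alpha> (\<lambda>i. int (m i))"

definition act_neg :: "(('l \<Rightarrow> int) \<Rightarrow> 'a \<Rightarrow> 'a) \<Rightarrow> ('l \<Rightarrow> nat) \<Rightarrow> 'a \<Rightarrow> 'a" where
  "act_neg \<alpha> m = \<alpha> (\<lambda>i. - int (m i))"

definition skew_product ::
  "('a, 'k) kgraph \<Rightarrow> (('l \<Rightarrow> int) \<Rightarrow> 'a \<Rightarrow> 'a) \<Rightarrow> ('a \<times> ('l \<Rightarrow> nat), 'k + 'l) kgraph" where
  "skew_product G \<alpha> =
     \<lparr> Mor = Mor G \<times> UNIV,
       rg = (\<lambda>(f, m). (rg G f, 0)),
       sr = (\<lambda>(f, m). (act_neg \<alpha> m (sr G f), 0)),
       cp = (\<lambda>(f, m) (g, n). (cp G f (act_pos \<alpha> m g), m + n)),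
       dg = (\<lambda>(f, m). case_sum (dg G f) m) \<rparr>"

text \<open>Infinite paths: degree-preserving functors Omega_j -> G, encoded as functions
 x a b (meaningful for a <= b), with x(n) = x n n.\<close>
definition inf_paths :: "('a, 'j) kgraph \<Rightarrow> (('j \<Rightarrow> nat) \<Rightarrow> ('j \<Rightarrow> nat) \<Rightarrow> 'a) set" where
  "inf_paths G = {x. (\<forall>a b. a \<le> b \<longrightarrow> x a b \<in> Mor G \<and> dg G (x a b) = b - a \<and>
                          rg G (x a b) = x a a \<and> sr G (x a b) = x b b) \<and>
                     (\<forall>a b c. a \<le> b \<longrightarrow> b \<le> c \<longrightarrow> cp G (x a b) (x b c) = x a c)}"

definition cofinal :: "('a, 'j) kgraph \<Rightarrow> bool" where
  "cofinal G \<longleftrightarrow> (\<forall>x\<in>inf_paths G. \<forall>v\<in>vertices G. \<exists>n. paths_between G v (x n n) \<noteq> {})"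

definition alpha_cofinal :: "('a, 'k) kgraph \<Rightarrow> (('l \<Rightarrow> int) \<Rightarrow> 'a \<Rightarrow> 'a) \<Rightarrow> bool" where
  "alpha_cofinal G \<alpha> \<longleftrightarrow> (\<forall>v\<in>vertices G. \<forall>x\<in>inf_paths G. \<exists>p. \<exists>m n :: 'l \<Rightarrow> nat.
      paths_between G (act_neg \<alpha> m v) (act_neg \<alpha> n (x p p)) \<noteq> {})"

end

theory Submission
  imports Defs
begin

lemma sp_Mor: "Mor (skew_product G \<alpha>) = Mor G \<times> UNIV"
  by (simp add: skew_product_def)
lemma sp_rg: "rg (skew_product G \<alpha>) (f,m) = (rg G f, 0)"
  by (simp add: skew_product_def)
lemma sp_sr: "sr (skew_product G \<alpha>) (f,m) = (act_neg \<alpha> m (sr G f), 0)"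
  by (simp add: skew_product_def)
lemma sp_cp: "cp (skew_product G \<alpha>) (f,m) (g,n) = (cp G f (act_pos \<alpha> m g), m+n)"
  by (simp add: skew_product_def)
lemma sp_dg: "dg (skew_product G \<alpha>) (f,m) = case_sum (dg G f) m"
  by (simp add: skew_product_def)

lemma act_mor: "is_action G \<alpha> \<Longrightarrow> f \<in> Mor G \<Longrightarrow> \<alpha> m f \<in> Mor G"
  unfolding is_action_def automorphism_def by (meson bij_betw_apply)
lemma act_add: "is_action G \<alpha> \<Longrightarrow> f \<in> Mor G \<Longrightarrow> \<alpha> m (\<alpha> n f) = \<alpha> (m+n) f"
  unfolding is_action_def by simp
lemma act_zero: "is_action G \<alpha> \<Longrightarrow> f \<in> Mor G \<Longrightarrow> \<alpha> 0 f = f"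
  unfolding is_action_def by simp
lemma act_rg: "is_action G \<alpha> \<Longrightarrow> f \<in> Mor G \<Longrightarrow> rg G (\<alpha> m f) = \<alpha> m (rg G f)"
  unfolding is_action_def automorphism_def by simp
lemma act_sr: "is_action G \<alpha> \<Longrightarrow> f \<in> Mor G \<Longrightarrow> sr G (\<alpha> m f) = \<alpha> m (sr G f)"
  unfolding is_action_def automorphism_def by simp
lemma act_dg: "is_action G \<alpha> \<Longrightarrow> f \<in> Mor G \<Longrightarrow> dg G (\<alpha> m f) = dg G f"
  unfolding is_action_def automorphism_def by simp
lemma act_cp: "is_action G \<alpha> \<Longrightarrow> f \<in> Mor G \<Longrightarrow> g \<in> Mor G \<Longrightarrow> sr G f = rg G g \<Longrightarrow>
   \<alpha> m (cp G f g) = cp G (\<alpha> m f) (\<alpha> m g)"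
  unfolding is_action_def automorphism_def by simp

lemma deg0_vertex:
  assumes kg: "is_kgraph G" and f: "f \<in> Mor G" and d: "dg G f = 0"
  shows "f = rg G f"
proof -
  have cat: "is_category G" using kg by (simp add: is_kgraph_def)
  have rf: "rg G f \<in> Mor G" "sr G f \<in> Mor G" using cat f unfolding is_category_def by auto
  have rr: "rg G (rg G f) = rg G f" "sr G (rg G f) = rg G f" "rg G (sr G f) = sr G f" "sr G (sr G f) = sr G f"
    using cat f unfolding is_category_def by auto
  have c1: "cp G (rg G f) f = f" "cp G f (sr G f) = f" using cat f unfolding is_category_def by auto
  have c2: "cp G (rg G f) (rg G f) = rg G f" "cp G (sr G f) (sr G f) = sr G f"
    using cat rf rr unfolding is_category_def by metis+
  have dgadd: "\<And>g h. g \<in> Mor G \<Longrightarrow> h \<in> Mor G \<Longrightarrow> sr G g = rg G h \<Longrightarrow> dg G (cp G g h) = dg G g + dg G h"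
    using kg by (simp add: is_kgraph_def)
  have "dg G (rg G f) = dg G (rg G f) + dg G (rg G f)"
    using dgadd[OF rf(1) rf(1)] rr c2 by simp
  hence dr: "dg G (rg G f) = 0" by (metis add_cancel_right_right)
  have "dg G (sr G f) = dg G (sr G f) + dg G (sr G f)"
    using dgadd[OF rf(2) rf(2)] rr c2 by simp
  hence ds: "dg G (sr G f) = 0" by (metis add_cancel_right_right)
  have "\<exists>!p. fst p \<in> Mor G \<and> snd p \<in> Mor G \<and> sr G (fst p) = rg G (snd p) \<and>
              cp G (fst p) (snd p) = f \<and> dg G (fst p) = 0 \<and> dg G (snd p) = 0"
  proof -
    have uf: "\<forall>f\<in>Mor G. \<forall>m n. dg G f = m + n \<longrightarrow>
        (\<exists>!p. fst p \<in> Mor G \<and> snd p \<in> Mor G \<and> sr G (fst p) = rg G (snd p) \<and>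
              cp G (fst p) (snd p) = f \<and> dg G (fst p) = m \<and> dg G (snd p) = n)"
      using kg unfolding is_kgraph_def by blast
    have "dg G f = 0 + 0" using d by simp
    from uf[rule_format, OF f this] show ?thesis .
  qed
  moreover have "fst (rg G f, f) \<in> Mor G \<and> snd (rg G f, f) \<in> Mor G \<and> sr G (fst (rg G f, f)) = rg G (snd (rg G f, f)) \<and>
              cp G (fst (rg G f, f)) (snd (rg G f, f)) = f \<and> dg G (fst (rg G f, f)) = 0 \<and> dg G (snd (rg G f, f)) = 0"
    using rf f rr c1 dr d by simp
  moreover have "fst (f, sr G f) \<in> Mor G \<and> snd (f, sr G f) \<in> Mor G \<and> sr G (fst (f, sr G f)) = rg G (snd (f, sr G f)) \<and>
              cp G (fst (f, sr G f)) (snd (f, sr G f)) = f \<and> dg G (fst (f, sr G f)) = 0 \<and> dg G (snd (f, sr G f)) = 0"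
    using rf f rr c1 ds d by simp
  ultimately have "(rg G f, f) = (f, sr G f)" by blast
  thus ?thesis by simp
qed

lemma dir1:
  fixes G :: "('a, 'k::finite) kgraph"
    and \<alpha> :: "('l::finite \<Rightarrow> int) \<Rightarrow> 'a \<Rightarrow> 'a"
  assumes kg: "is_kgraph G" and act: "is_action G \<alpha>" and cof: "cofinal (skew_product G \<alpha>)"
  shows "alpha_cofinal G \<alpha>"
  unfolding alpha_cofinal_def
proof (intro ballI)
  fix v x assume v: "v \<in> vertices G" and x: "x \<in> inf_paths G"
  have cat: "is_category G" using kg by (simp add: is_kgraph_def)
  have xp: "\<And>a b. a \<le> b \<Longrightarrow> x a b \<in> Mor G \<and> dg G (x a b) = b - a \<and> rg G (x a b) = x a a \<and> sr G (x a b) = x b b"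
    using x by (simp add: inf_paths_def)
  have xc: "\<And>a b c. a \<le> b \<Longrightarrow> b \<le> c \<Longrightarrow> cp G (x a b) (x b c) = x a c"
    using x by (simp add: inf_paths_def)
  define X where "X = (\<lambda>a b :: 'k+'l \<Rightarrow> nat. (\<alpha> (\<lambda>i. - int (a (Inr i))) (x (\<lambda>j. a (Inl j)) (\<lambda>j. b (Inl j))),
        (\<lambda>i. b (Inr i) - a (Inr i))))"
  have le: "\<And>a b :: 'k+'l \<Rightarrow> nat. a \<le> b \<Longrightarrow> (\<lambda>j. a (Inl j)) \<le> (\<lambda>j. b (Inl j)) \<and> (\<lambda>j. a (Inr j)) \<le> (\<lambda>j. b (Inr j))"
    by (simp add: le_fun_def)
  have "X \<in> inf_paths (skew_product G \<alpha>)"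
    unfolding inf_paths_def
  proof (intro CollectI conjI allI impI)
    fix a b :: "'k+'l \<Rightarrow> nat" assume ab: "a \<le> b"
    note L = le[OF ab]
    note P = xp[OF conjunct1[OF L]]
    show "X a b \<in> Mor (skew_product G \<alpha>)" using P act_mor[OF act] by (simp add: X_def sp_Mor)
    show "dg (skew_product G \<alpha>) (X a b) = b - a"
      using P act_dg[OF act] by (auto simp: X_def sp_dg fun_diff_def split: sum.split)
    show "rg (skew_product G \<alpha>) (X a b) = X a a"
      using P act_rg[OF act] by (simp add: X_def sp_rg zero_fun_def)
    have "sr (skew_product G \<alpha>) (X a b) = (\<alpha> (\<lambda>i. - int (b (Inr i) - a (Inr i))) (\<alpha> (\<lambda>i. - int (a (Inr i))) (x (\<lambda>j. b (Inl j)) (\<lambda>j. b (Inl j)))), 0)"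
      using P act_sr[OF act] by (simp add: X_def sp_sr act_neg_def)
    also have "\<dots> = (\<alpha> ((\<lambda>i. - int (b (Inr i) - a (Inr i))) + (\<lambda>i. - int (a (Inr i)))) (x (\<lambda>j. b (Inl j)) (\<lambda>j. b (Inl j))), 0)"
    proof -
      have "x (\<lambda>j. b (Inl j)) (\<lambda>j. b (Inl j)) \<in> Mor G" using xp[of "\<lambda>j. b (Inl j)" "\<lambda>j. b (Inl j)"] by simp
      from act_add[OF act this] show ?thesis by simp
    qed
    also have "(\<lambda>i. - int (b (Inr i) - a (Inr i))) + (\<lambda>i. - int (a (Inr i))) = (\<lambda>i. - int (b (Inr i)))"
      using L by (auto simp: le_fun_def plus_fun_def of_nat_diff)
    finally show "sr (skew_product G \<alpha>) (X a b) = X b b" by (simp add: X_def)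
  next
    fix a b c :: "'k+'l \<Rightarrow> nat" assume ab: "a \<le> b" and bc: "b \<le> c"
    note L1 = le[OF ab] and L2 = le[OF bc]
    note P1 = xp[OF conjunct1[OF L1]] and P2 = xp[OF conjunct1[OF L2]]
    have e1: "act_pos \<alpha> (\<lambda>i. b (Inr i) - a (Inr i)) (\<alpha> (\<lambda>i. - int (b (Inr i))) (x (\<lambda>j. b (Inl j)) (\<lambda>j. c (Inl j))))
        = \<alpha> ((\<lambda>i. int (b (Inr i) - a (Inr i))) + (\<lambda>i. - int (b (Inr i)))) (x (\<lambda>j. b (Inl j)) (\<lambda>j. c (Inl j)))"
      using P2 act_add[OF act] by (simp add: act_pos_def)
    also have "(\<lambda>i. int (b (Inr i) - a (Inr i))) + (\<lambda>i. - int (b (Inr i))) = (\<lambda>i. - int (a (Inr i)))"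
      using L1 by (auto simp: le_fun_def plus_fun_def of_nat_diff)
    finally have e1': "act_pos \<alpha> (\<lambda>i. b (Inr i) - a (Inr i)) (\<alpha> (\<lambda>i. - int (b (Inr i))) (x (\<lambda>j. b (Inl j)) (\<lambda>j. c (Inl j))))
        = \<alpha> (\<lambda>i. - int (a (Inr i))) (x (\<lambda>j. b (Inl j)) (\<lambda>j. c (Inl j)))" .
    have e2: "(\<lambda>i. b (Inr i) - a (Inr i)) + (\<lambda>i. c (Inr i) - b (Inr i)) = (\<lambda>i. c (Inr i) - a (Inr i))"
      using L1 L2 by (auto simp: le_fun_def plus_fun_def)
    have ac: "(\<lambda>j. a (Inl j)) \<le> (\<lambda>j. c (Inl j))" using L1 L2 order_trans by blast
    have "cp G (\<alpha> (\<lambda>i. - int (a (Inr i))) (x (\<lambda>j. a (Inl j)) (\<lambda>j. b (Inl j))))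
              (\<alpha> (\<lambda>i. - int (a (Inr i))) (x (\<lambda>j. b (Inl j)) (\<lambda>j. c (Inl j))))
        = \<alpha> (\<lambda>i. - int (a (Inr i))) (x (\<lambda>j. a (Inl j)) (\<lambda>j. c (Inl j)))"
      using act_cp[OF act, of "x (\<lambda>j. a (Inl j)) (\<lambda>j. b (Inl j))" "x (\<lambda>j. b (Inl j)) (\<lambda>j. c (Inl j))"]
        P1 P2 xc[OF conjunct1[OF L1] conjunct1[OF L2]] by simp
    then show "cp (skew_product G \<alpha>) (X a b) (X b c) = X a c"
      by (simp add: X_def sp_cp e1' e2)
  qed
  moreover have "(v, 0) \<in> vertices (skew_product G \<alpha>)"
    using v by (auto simp: vertices_def sp_Mor sp_dg zero_fun_def split: sum.split)
  ultimately obtain n where "paths_between (skew_product G \<alpha>) (v, 0) (X n n) \<noteq> {}"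
    using cof unfolding cofinal_def by blast
  then obtain f m where fm: "(f, m) \<in> Mor (skew_product G \<alpha>)" "rg (skew_product G \<alpha>) (f, m) = (v, 0)"
      "sr (skew_product G \<alpha>) (f, m) = X n n"
    unfolding paths_between_def by auto
  have f: "f \<in> Mor G" using fm by (simp add: sp_Mor)
  have sf: "sr G f \<in> Mor G" using f cat unfolding is_category_def by blast
  have rv: "rg G f = v" using fm by (simp add: sp_rg)
  have sv: "act_neg \<alpha> m (sr G f) = \<alpha> (\<lambda>i. - int (n (Inr i))) (x (\<lambda>j. n (Inl j)) (\<lambda>j. n (Inl j)))"
    using fm by (simp add: sp_sr X_def)
  have "act_neg \<alpha> m f \<in> paths_between G (act_neg \<alpha> m v) (act_neg \<alpha> (\<lambda>i. n (Inr i)) (x (\<lambda>j. n (Inl j)) (\<lambda>j. n (Inl j))))"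
    using f sv rv act_mor[OF act] act_rg[OF act] act_sr[OF act]
    by (simp add: paths_between_def act_neg_def)
  then show "\<exists>p m n. paths_between G (act_neg \<alpha> m v) (act_neg \<alpha> n (x p p)) \<noteq> {}" by blast
qed

lemma dir2:
  fixes G :: "('a, 'k::finite) kgraph"
    and \<alpha> :: "('l::finite \<Rightarrow> int) \<Rightarrow> 'a \<Rightarrow> 'a"
  assumes kg: "is_kgraph G" and act: "is_action G \<alpha>" and acof: "alpha_cofinal G \<alpha>"
  shows "cofinal (skew_product G \<alpha>)"
  unfolding cofinal_def
proof (intro ballI)
  fix X w assume X: "X \<in> inf_paths (skew_product G \<alpha>)" and w: "w \<in> vertices (skew_product G \<alpha>)"
  have cat: "is_category G" using kg by (simp add: is_kgraph_def)
  have Xp: "\<And>a b. a \<le> b \<Longrightarrow> X a b \<in> Mor (skew_product G \<alpha>) \<and> dg (skew_product G \<alpha>) (X a b) = b - a \<and>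
     rg (skew_product G \<alpha>) (X a b) = X a a \<and> sr (skew_product G \<alpha>) (X a b) = X b b"
    using X by (simp add: inf_paths_def)
  have Xc: "\<And>a b c. a \<le> b \<Longrightarrow> b \<le> c \<Longrightarrow> cp (skew_product G \<alpha>) (X a b) (X b c) = X a c"
    using X by (simp add: inf_paths_def)
  obtain v m0 where wv: "w = (v, m0)" by (cases w)
  have v: "v \<in> Mor G" and dv: "case_sum (dg G v) m0 = 0" using w wv by (auto simp: vertices_def sp_Mor sp_dg)
  have m0: "m0 = 0" using fun_cong[OF dv, of "Inr i" for i] by (auto simp: zero_fun_def)
  have dv0: "dg G v = 0" using fun_cong[OF dv, of "Inl i" for i] by (auto simp: zero_fun_def)
  define E :: "('k \<Rightarrow> nat) \<Rightarrow> ('l \<Rightarrow> nat) \<Rightarrow> ('k+'l \<Rightarrow> nat)" where "E = (\<lambda>a q. case_sum a q)"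
  have Ele: "\<And>a b q r. a \<le> b \<Longrightarrow> q \<le> r \<Longrightarrow> E a q \<le> E b r"
    by (auto simp: E_def le_fun_def split: sum.split)
  have Ediff: "\<And>a b q r. E b r - E a q = E (b - a) (r - q)"
    by (auto simp: E_def fun_diff_def split: sum.split)
  have Eeq: "\<And>a b q r. E a q = E b r \<longleftrightarrow> a = b \<and> q = r"
  proof
    fix a b q r assume h: "E a q = E b r"
    show "a = b \<and> q = r" using fun_cong[OF h, of "Inl i" for i] fun_cong[OF h, of "Inr i" for i]
      by (auto simp: E_def)
  qed (simp)
  have gen: "\<And>a b q r. a \<le> b \<Longrightarrow> q \<le> r \<Longrightarrow>
      fst (X (E a q) (E b r)) \<in> Mor G \<and> dg G (fst (X (E a q) (E b r))) = b - a \<and> snd (X (E a q) (E b r)) = r - q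
      \<and> X (E a q) (E a q) = (rg G (fst (X (E a q) (E b r))), 0)
      \<and> X (E b r) (E b r) = (act_neg \<alpha> (r - q) (sr G (fst (X (E a q) (E b r)))), 0)"
  proof -
    fix a b q r assume ab: "(a::'k\<Rightarrow>nat) \<le> b" and qr: "(q::'l\<Rightarrow>nat) \<le> r"
    obtain f m where fm: "X (E a q) (E b r) = (f, m)" by (cases "X (E a q) (E b r)")
    have P: "(f,m) \<in> Mor (skew_product G \<alpha>) \<and> dg (skew_product G \<alpha>) (f,m) = E (b - a) (r - q) \<and>
     rg (skew_product G \<alpha>) (f,m) = X (E a q) (E a q) \<and> sr (skew_product G \<alpha>) (f,m) = X (E b r) (E b r)"
      using Xp[OF Ele[OF ab qr]] fm Ediff by simp
    hence "E (dg G f) m = E (b - a) (r - q)" by (simp add: sp_dg E_def)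
    hence "dg G f = b - a" "m = r - q" using Eeq by auto
    then show "?thesis a b q r" using P fm by (simp add: sp_Mor sp_rg sp_sr)
  qed
  define y where "y = (\<lambda>a b. fst (X (E a 0) (E b 0)))"
  have "y \<in> inf_paths G"
    unfolding inf_paths_def
  proof (intro CollectI conjI allI impI)
    fix a b :: "'k \<Rightarrow> nat" assume ab: "a \<le> b"
    note g = gen[OF ab order_refl[of 0]]
    note ga = gen[OF order_refl[of a] order_refl[of 0]]
    note gb = gen[OF order_refl[of b] order_refl[of 0]]
    show "y a b \<in> Mor G" "dg G (y a b) = b - a" using g by (simp_all add: y_def)
    have "X (E a 0) (E a 0) = (y a a, 0)" using ga
      by (simp add: y_def prod_eq_iff)
    then show "rg G (y a b) = y a a" using g by (simp add: y_def)
    have s0: "sr G (y a b) \<in> Mor G" using g cat unfolding is_category_def y_def by blast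
    have "act_neg \<alpha> 0 (sr G (y a b)) = sr G (y a b)"
      using act_zero[OF act s0] by (simp add: act_neg_def zero_fun_def)
    moreover have "X (E b 0) (E b 0) = (y b b, 0)" using gb
      by (simp add: y_def prod_eq_iff)
    ultimately show "sr G (y a b) = y b b" using g by (simp add: y_def)
  next
    fix a b c :: "'k \<Rightarrow> nat" assume ab: "a \<le> b" and bc: "b \<le> c"
    note g1 = gen[OF ab order_refl[of 0]] and g2 = gen[OF bc order_refl[of 0]]
    have "X (E a 0) (E b 0) = (y a b, 0)" "X (E b 0) (E c 0) = (y b c, 0)"
      using g1 g2 by (simp_all add: y_def prod_eq_iff)
    moreover have "y b c \<in> Mor G" using g2 by (simp add: y_def)
    ultimately have "cp (skew_product G \<alpha>) (X (E a 0) (E b 0)) (X (E b 0) (E c 0)) = (cp G (y a b) (y b c), 0)"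
      using act_zero[OF act] by (simp add: sp_cp act_pos_def zero_fun_def)
    then show "cp G (y a b) (y b c) = y a c"
      using Xc[OF Ele[OF ab order_refl] Ele[OF bc order_refl]] by (simp add: y_def)
  qed
  have vv: "v \<in> vertices G" using v dv0 by (simp add: vertices_def)
  obtain p m n where "paths_between G (act_neg \<alpha> m v) (act_neg \<alpha> n (y p p)) \<noteq> {}"
    using acof vv \<open>y \<in> inf_paths G\<close> unfolding alpha_cofinal_def by blast
  then obtain lm where lam: "lm \<in> Mor G" "rg G lm = act_neg \<alpha> m v" "sr G lm = act_neg \<alpha> n (y p p)"
    unfolding paths_between_def by auto
  note g = gen[OF order_refl[of p] zero_le[of n]]
  obtain \<mu> where mu: "fst (X (E p 0) (E p n)) = \<mu>" by blast
  have muM: "\<mu> \<in> Mor G" and dmu: "dg G \<mu> = 0" using g mu by auto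
  have mur: "\<mu> = rg G \<mu>" using deg0_vertex[OF kg muM dmu] .
  have mus: "sr G \<mu> = \<mu>" using mur cat muM unfolding is_category_def by metis
  have "X (E p 0) (E p 0) = (rg G \<mu>, 0)" using g mu by simp
  hence ypp: "y p p = \<mu>" using mur by (simp add: y_def)
  have XQ: "X (E p n) (E p n) = (act_neg \<alpha> n (y p p), 0)" using g mu mus ypp by simp
  have ex: "(act_pos \<alpha> m lm, m) \<in> paths_between (skew_product G \<alpha>) w (X (E p n) (E p n))"
  proof -
    have a1: "act_pos \<alpha> m lm \<in> Mor G" using act_mor[OF act lam(1)] by (simp add: act_pos_def)
    have "rg G (act_pos \<alpha> m lm) = \<alpha> ((\<lambda>i. int (m i)) + (\<lambda>i. - int (m i))) v"
      using act_rg[OF act lam(1)] lam(2) act_add[OF act v] by (simp add: act_pos_def act_neg_def)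
    also have "(\<lambda>i. int (m i)) + (\<lambda>i. - int (m i)) = 0" by (simp add: plus_fun_def zero_fun_def)
    finally have a2: "rg G (act_pos \<alpha> m lm) = v" using act_zero[OF act v] by (simp add: zero_fun_def)
    have ym: "y p p \<in> Mor G" using muM ypp by simp
    have yn: "act_neg \<alpha> n (y p p) \<in> Mor G" using act_mor[OF act ym] by (simp add: act_neg_def)
    have "act_neg \<alpha> m (sr G (act_pos \<alpha> m lm)) = \<alpha> ((\<lambda>i. - int (m i)) + (\<lambda>i. int (m i))) (act_neg \<alpha> n (y p p))"
      using act_sr[OF act lam(1)] lam(3) act_add[OF act yn] by (simp add: act_pos_def act_neg_def)
    also have "(\<lambda>i. - int (m i)) + (\<lambda>i. int (m i)) = 0" by (simp add: plus_fun_def zero_fun_def)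
    finally have a3: "act_neg \<alpha> m (sr G (act_pos \<alpha> m lm)) = act_neg \<alpha> n (y p p)" using act_zero[OF act yn] by (simp add: zero_fun_def)
    show ?thesis using a1 a2 a3 XQ wv m0 by (simp add: paths_between_def sp_Mor sp_rg sp_sr)
  qed
  then show "\<exists>n. paths_between (skew_product G \<alpha>) w (X n n) \<noteq> {}" by blast
qed

theorem lemma4p6:
  fixes G :: "('a, 'k::finite) kgraph"
    and \<alpha> :: "('l::finite \<Rightarrow> int) \<Rightarrow> 'a \<Rightarrow> 'a"
  assumes "is_kgraph G" and "row_finite G" and "no_sources G" and "is_action G \<alpha>"
  shows "alpha_cofinal G \<alpha> \<longleftrightarrow> cofinal (skew_product G \<alpha>)"
  using dir1[OF assms(1,4)] dir2[OF assms(1,4)] by blast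

end
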